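(* Let $\alpha>0$ and $k\ge 2$ be an integer. Then $$\sum_{\sigma\in\mathfrak S_k}\det\Big[\Gamma(1+\sigma(i)\alpha)\,\Gamma(j+\sigma(i)\alpha)\prod_{r=1}^{i-1}(r+\sigma(i)\alpha)\Big]_{1\le i,j\le k}=\alpha^{k(k-1)}\Big(\prod_{j=1}^k (j-1)!\,\Gamma(1+\alpha j)\Big)^2.$$
   Context: $\mathfrak S_k$ is the symmetric group on $\{1,\dots,k\}$; in the matrix, $i$ is the row index and $j$ the column index, and empty products equal $1$. *)

theory Defs
  imports "HOL-Analysis.Analysis" "Jordan_Normal_Form.Determinant"
begin

(* The k x k matrix of the statement, for a permutation sigma of {1..k}.
   Jordan_Normal_Form matrices are 0-indexed: entry (i,j) with i,j < k
   corresponds to the paper's row i+1, column j+1. *)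
definition gamma_mat :: "real \<Rightarrow> nat \<Rightarrow> (nat \<Rightarrow> nat) \<Rightarrow> real mat" where
  "gamma_mat \<alpha> k \<sigma> = mat k k (\<lambda>(i, j).
      Gamma (1 + real (\<sigma> (i + 1)) * \<alpha>) * Gamma (real (j + 1) + real (\<sigma> (i + 1)) * \<alpha>)
      * (\<Prod>r = 1..i. (real r + real (\<sigma> (i + 1)) * \<alpha>)))"

end

theory Submission
  imports Defs
begin

lemma det_row_scale:
  fixes a :: "nat \<Rightarrow> 'a::comm_ring_1"
  shows "Determinant.det (mat n n (\<lambda>(i,j). a i * B i j)) = (\<Prod>i<n. a i) * Determinant.det (mat n n (\<lambda>(i,j). B i j))"
proof -
  have c1: "mat n n (\<lambda>(i,j). a i * B i j) \<in> carrier_mat n n" by simp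
  have c2: "mat n n (\<lambda>(i,j). B i j) \<in> carrier_mat n n" by simp
  have "\<And>p. p permutes {0..<n} \<Longrightarrow> (\<Prod>i = 0..<n. mat n n (\<lambda>(i,j). a i * B i j) $$ (i, p i))
        = (\<Prod>i<n. a i) * (\<Prod>i = 0..<n. mat n n (\<lambda>(i,j). B i j) $$ (i, p i))"
  proof -
    fix p assume p: "p permutes {0..<n}"
    have "(\<Prod>i = 0..<n. mat n n (\<lambda>(i,j). a i * B i j) $$ (i, p i)) = (\<Prod>i = 0..<n. a i * B i (p i))"
      by (rule prod.cong) (use p permutes_in_image[OF p] in auto)
    also have "\<dots> = (\<Prod>i<n. a i) * (\<Prod>i = 0..<n. B i (p i))"
      by (simp add: prod.distrib atLeast0LessThan)
    also have "(\<Prod>i = 0..<n. B i (p i)) = (\<Prod>i = 0..<n. mat n n (\<lambda>(i,j). B i j) $$ (i, p i))"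
      by (rule prod.cong) (use p permutes_in_image[OF p] in auto)
    finally show "?thesis p" .
  qed
  then show ?thesis unfolding det_def'[OF c1] det_def'[OF c2]
    by (simp add: sum_distrib_left mult.left_commute)
qed

lemma vdm:
  fixes x :: "nat \<Rightarrow> real"
  shows "Determinant.det (mat n n (\<lambda>(i,j). pochhammer (c + x i) j)) = (\<Prod>i'<n. \<Prod>i<i'. (x i' - x i))"
proof (induction n arbitrary: x)
  case 0
  then show ?case by simp
next
  case (Suc n)
  define A where "A = mat (Suc n) (Suc n) (\<lambda>(i,j). pochhammer (c + x i) j)"
  define U where "U = mat (Suc n) (Suc n) (\<lambda>(l,j). if l = j then 1 else if j = Suc l then - (c + x 0 + real l) else (0::real))"
  define B where "B = mat (Suc n) (Suc n) (\<lambda>(i,j). if j = 0 then 1 else (x i - x 0) * pochhammer (c + x i) (j - 1))"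
  have Ac: "A \<in> carrier_mat (Suc n) (Suc n)" and Uc: "U \<in> carrier_mat (Suc n) (Suc n)"
    and Bc: "B \<in> carrier_mat (Suc n) (Suc n)" unfolding A_def U_def B_def by auto
  have "upper_triangular U" unfolding U_def by (intro upper_triangularI) auto
  then have dU: "Determinant.det U = 1"
  proof -
    have "diag_mat U = map (\<lambda>i. 1) [0..<Suc n]"
      unfolding diag_mat_def by (rule map_cong) (auto simp: U_def)
    then show ?thesis using det_upper_triangular[OF \<open>upper_triangular U\<close> Uc]
      by (simp add: map_replicate_const)
  qed
  have AU: "A * U = B"
  proof (rule eq_matI)
    fix i j assume i: "i < dim_row B" and j: "j < dim_col B"
    then have i': "i < Suc n" and j': "j < Suc n" unfolding B_def by auto
    have "(A * U) $$ (i,j) = (\<Sum>l<Suc n. A $$ (i,l) * U $$ (l,j))"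
      using i' j' Ac Uc by (simp add: scalar_prod_def atLeast0LessThan[symmetric] lessThan_atLeast0)
    also have "\<dots> = (\<Sum>l<Suc n. (if l = j then pochhammer (c + x i) l else 0)
          + (if Suc l = j then - (c + x 0 + real l) * pochhammer (c + x i) l else 0))"
      by (rule sum.cong) (use i' j' in \<open>auto simp: A_def U_def\<close>)
    also have "\<dots> = B $$ (i,j)"
    proof (cases j)
      case 0
      then show ?thesis using i' by (simp add: sum.distrib B_def)
    next
      case (Suc j0)
      have "(\<Sum>l<Suc n. (if Suc l = j then - (c + x 0 + real l) * pochhammer (c + x i) l else 0))
          = - (c + x 0 + real j0) * pochhammer (c + x i) j0"
        using Suc j' by (simp add: sum.delta del: sum.lessThan_Suc)
      moreover have "(\<Sum>l<Suc n. (if l = j then pochhammer (c + x i) l else 0)) = pochhammer (c + x i) j"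
        using j' by (simp add: sum.delta del: sum.lessThan_Suc)
      ultimately show ?thesis using Suc i' j'
        by (simp add: sum.distrib B_def pochhammer_Suc algebra_simps del: sum.lessThan_Suc)
    qed
    finally show "(A * U) $$ (i,j) = B $$ (i,j)" .
  qed (use Ac Uc Bc in auto)
  have dA: "Determinant.det A = Determinant.det B"
    using det_mult[OF Ac Uc] dU AU by simp
  have "Determinant.det B = (\<Sum>j<Suc n. B $$ (0,j) * cofactor B 0 j)"
    by (rule laplace_expansion_row[OF Bc]) simp
  also have "\<dots> = (\<Sum>j<Suc n. if j = 0 then cofactor B 0 0 else 0)"
    by (rule sum.cong) (auto simp: B_def)
  also have "\<dots> = Determinant.det (mat_delete B 0 0)" by (simp add: cofactor_def)
  also have "mat_delete B 0 0 = mat n n (\<lambda>(i,j). (x (Suc i) - x 0) * pochhammer (c + x (Suc i)) j)"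
    unfolding mat_delete_def B_def by (rule eq_matI) auto
  also have "Determinant.det \<dots> = (\<Prod>i<n. x (Suc i) - x 0) * (\<Prod>i'<n. \<Prod>i<i'. (x (Suc i') - x (Suc i)))"
    using det_row_scale[where a="\<lambda>i. x (Suc i) - x 0" and n=n and B="\<lambda>i j. pochhammer (c + x (Suc i)) j"]
      Suc.IH[of "\<lambda>i. x (Suc i)"] by simp
  also have "\<dots> = (\<Prod>i'<Suc n. \<Prod>i<i'. (x i' - x i))"
    by (simp add: prod.lessThan_Suc_shift prod.distrib del: prod.lessThan_Suc)
  finally show ?case using dA unfolding A_def by simp
qed
lemma gamma_shift:
  fixes y :: real assumes "y \<ge> 0"
  shows "Gamma (real (j+1) + y) = Gamma (1+y) * pochhammer (1+y) j"
proof -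
  have nz: "1 + y \<notin> \<int>\<^sub>\<le>\<^sub>0" using assms nonpos_Ints_nonpos by force
  have "Gamma (1+y) > 0" using assms by (intro Gamma_real_pos) simp
  then show ?thesis using pochhammer_Gamma[OF nz, of j] by (simp add: field_simps)
qed

lemma prod_poch:
  fixes y :: real
  shows "(\<Prod>r = 1..i. real r + y) = pochhammer (1+y) i"
proof (induction i)
  case 0 then show ?case by simp
next
  case (Suc i)
  have "(\<Prod>r = 1..Suc i. real r + y) = (real (Suc i) + y) * (\<Prod>r = 1..i. real r + y)"
    by (simp add: prod.nat_ivl_Suc')
  then show ?case using Suc by (simp add: pochhammer_Suc algebra_simps)
qed

lemma fact_prod: "(\<Prod>i<n. real n - real i) = fact n"
proof (induction n)
  case 0 then show ?case by simp
next
  case (Suc n)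
  then show ?case by (simp add: prod.lessThan_Suc_shift del: prod.lessThan_Suc)
qed

lemma sum_id2: "(\<Sum>i<k. i) * 2 = k * (k - 1::nat)"
proof (induction k)
  case 0 then show ?case by simp
next
  case (Suc k) then show ?case by (cases k) (auto simp: algebra_simps)
qed

lemma entry_eq:
  fixes s :: real assumes "s \<ge> 0"
  shows "Gamma (1 + s) * Gamma (real (j + 1) + s) * (\<Prod>r = 1..i. real r + s)
     = (Gamma (1+s)^2 * pochhammer (1+s) i) * pochhammer (1+s) j"
  using gamma_shift[OF assms, of j] prod_poch[of s i] by (simp add: power2_eq_square)

theorem mainTheorem6:
  fixes \<alpha> :: real and k :: nat
  assumes "\<alpha> > 0" and "k \<ge> 2"
  shows "(\<Sum>\<sigma> | \<sigma> permutes {1..k}. det (gamma_mat \<alpha> k \<sigma>))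
         = \<alpha> ^ (k * (k - 1)) * (\<Prod>j = 1..k. fact (j - 1) * Gamma (1 + \<alpha> * real j)) ^ 2"
proof -
  define y where "y m = real (Suc m) * \<alpha>" for m
  define G where "G m = Gamma (1 + y m)" for m
  define Aa where "Aa m i = G m ^ 2 * pochhammer (1 + y m) i" for m i
  define Bm where "Bm = mat k k (\<lambda>(m,j). pochhammer (1 + y m) j)"
  define F where "F \<pi> = Determinant.det (mat k k (\<lambda>(i,j). Aa (\<pi> i) i * pochhammer (1 + y (\<pi> i)) j))" for \<pi> :: "nat \<Rightarrow> nat"
  define to\<pi> where "to\<pi> \<sigma> = (\<lambda>i. if i < k then \<sigma> (Suc i) - 1 else i)" for \<sigma> :: "nat \<Rightarrow> nat"
  define to\<sigma> where "to\<sigma> \<pi> = (\<lambda>m. if 1 \<le> m \<and> m \<le> k then Suc (\<pi> (m - 1)) else m)" for \<pi> :: "nat \<Rightarrow> nat"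
  let ?S = "{\<sigma>. \<sigma> permutes {1..k}}"
  let ?T = "{\<pi>. \<pi> permutes {0..<k}}"
  have Bc: "Bm \<in> carrier_mat k k" unfolding Bm_def by simp
  have step1: "(\<Sum>\<sigma> \<in> ?S. det (gamma_mat \<alpha> k \<sigma>)) = (\<Sum>\<pi> \<in> ?T. F \<pi>)"
  proof (rule sum.reindex_bij_witness[of ?S to\<sigma> to\<pi>])
    fix \<sigma> assume "\<sigma> \<in> ?S"
    then have p: "\<sigma> permutes {1..k}" by simp
    have im: "\<And>m. 1 \<le> m \<Longrightarrow> m \<le> k \<Longrightarrow> 1 \<le> \<sigma> m \<and> \<sigma> m \<le> k"
      using permutes_in_image[OF p] by auto
    show "to\<sigma> (to\<pi> \<sigma>) = \<sigma>"
    proof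
      fix m show "to\<sigma> (to\<pi> \<sigma>) m = \<sigma> m"
        using im[of m] permutes_not_in[OF p, of m] by (auto simp: to\<sigma>_def to\<pi>_def)
    qed
    have "to\<pi> \<sigma> permutes {0..<k}"
    proof (rule bij_imp_permutes)
      have inj: "inj_on (to\<pi> \<sigma>) {0..<k}"
      proof (rule inj_onI)
        fix a b assume a: "a \<in> {0..<k}" and b: "b \<in> {0..<k}" and e: "to\<pi> \<sigma> a = to\<pi> \<sigma> b"
        have "\<sigma> (Suc a) = \<sigma> (Suc b)" using e a b im[of "Suc a"] im[of "Suc b"] by (auto simp: to\<pi>_def)
        then show "a = b" using permutes_inj[OF p] by (auto dest: injD)
      qed
      have sub: "to\<pi> \<sigma> ` {0..<k} \<subseteq> {0..<k}"
      proof
        fix z assume "z \<in> to\<pi> \<sigma> ` {0..<k}"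
        then obtain a where a: "a < k" and z: "z = to\<pi> \<sigma> a" by auto
        show "z \<in> {0..<k}" using im[of "Suc a"] a z by (auto simp: to\<pi>_def)
      qed
      show "bij_betw (to\<pi> \<sigma>) {0..<k} {0..<k}"
        using inj sub by (simp add: bij_betw_def endo_inj_surj)
      show "\<And>x. x \<notin> {0..<k} \<Longrightarrow> to\<pi> \<sigma> x = x" by (auto simp: to\<pi>_def)
    qed
    then show "to\<pi> \<sigma> \<in> ?T" by simp
    show "F (to\<pi> \<sigma>) = det (gamma_mat \<alpha> k \<sigma>)"
      unfolding F_def gamma_mat_def
    proof (rule arg_cong[where f = Determinant.det], rule eq_matI)
      fix i j assume i: "i < dim_row (mat k k (\<lambda>(i, j). Gamma (1 + real (\<sigma> (i + 1)) * \<alpha>) * Gamma (real (j + 1) + real (\<sigma> (i + 1)) * \<alpha>) *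
            (\<Prod>r = 1..i. real r + real (\<sigma> (i + 1)) * \<alpha>)))"
        and j: "j < dim_col (mat k k (\<lambda>(i, j). Gamma (1 + real (\<sigma> (i + 1)) * \<alpha>) * Gamma (real (j + 1) + real (\<sigma> (i + 1)) * \<alpha>) *
            (\<Prod>r = 1..i. real r + real (\<sigma> (i + 1)) * \<alpha>)))"
      then have i: "i < k" and j: "j < k" by auto
      have s: "y (to\<pi> \<sigma> i) = real (\<sigma> (i + 1)) * \<alpha>"
        using im[of "Suc i"] i by (auto simp: y_def to\<pi>_def)
      have nn: "real (\<sigma> (i + 1)) * \<alpha> \<ge> 0" using assms(1) by simp
      show "mat k k (\<lambda>(i, j). Aa (to\<pi> \<sigma> i) i * pochhammer (1 + y (to\<pi> \<sigma> i)) j) $$ (i, j) =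
         mat k k (\<lambda>(i, j). Gamma (1 + real (\<sigma> (i + 1)) * \<alpha>) * Gamma (real (j + 1) + real (\<sigma> (i + 1)) * \<alpha>) *
            (\<Prod>r = 1..i. real r + real (\<sigma> (i + 1)) * \<alpha>)) $$ (i, j)"
        using i j entry_eq[OF nn, of j i] s by (simp add: Aa_def G_def)
    qed auto
  next
    fix \<pi> assume "\<pi> \<in> ?T"
    then have p: "\<pi> permutes {0..<k}" by simp
    have im: "\<And>m. m < k \<Longrightarrow> \<pi> m < k"
      using permutes_in_image[OF p] by auto
    show "to\<pi> (to\<sigma> \<pi>) = \<pi>"
    proof
      fix m show "to\<pi> (to\<sigma> \<pi>) m = \<pi> m"
        using permutes_not_in[OF p, of m] by (auto simp: to\<sigma>_def to\<pi>_def)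
    qed
    have "to\<sigma> \<pi> permutes {1..k}"
    proof (rule bij_imp_permutes)
      have inj: "inj_on (to\<sigma> \<pi>) {1..k}"
      proof (rule inj_onI)
        fix a b assume a: "a \<in> {1..k}" and b: "b \<in> {1..k}" and e: "to\<sigma> \<pi> a = to\<sigma> \<pi> b"
        have "\<pi> (a - 1) = \<pi> (b - 1)" using e a b by (auto simp: to\<sigma>_def)
        then have "a - 1 = b - 1" using permutes_inj[OF p] by (auto dest: injD)
        then show "a = b" using a b by auto
      qed
      have sub: "to\<sigma> \<pi> ` {1..k} \<subseteq> {1..k}"
      proof
        fix z assume "z \<in> to\<sigma> \<pi> ` {1..k}"
        then obtain a where a: "a \<in> {1..k}" and z: "z = to\<sigma> \<pi> a" by auto
        show "z \<in> {1..k}" using im[of "a - 1"] a z by (auto simp: to\<sigma>_def Suc_le_eq)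
      qed
      show "bij_betw (to\<sigma> \<pi>) {1..k} {1..k}"
        using inj sub by (simp add: bij_betw_def endo_inj_surj)
      show "\<And>x. x \<notin> {1..k} \<Longrightarrow> to\<sigma> \<pi> x = x" by (auto simp: to\<sigma>_def)
    qed
    then show "to\<sigma> \<pi> \<in> ?S" by simp
  qed
  have step2: "F \<pi> = (\<Prod>i = 0..<k. Aa (\<pi> i) i) * of_int (sign \<pi>) * Determinant.det Bm" if p: "\<pi> permutes {0..<k}" for \<pi>
  proof -
    have "F \<pi> = (\<Prod>i<k. Aa (\<pi> i) i) * Determinant.det (mat k k (\<lambda>(i,j). pochhammer (1 + y (\<pi> i)) j))"
      unfolding F_def by (rule det_row_scale)
    also have "mat k k (\<lambda>(i,j). pochhammer (1 + y (\<pi> i)) j) = mat k k (\<lambda>(i,j). Bm $$ (\<pi> i, j))"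
      using permutes_in_image[OF p] by (intro eq_matI) (auto simp: Bm_def)
    also have "Determinant.det \<dots> = of_int (sign \<pi>) * Determinant.det Bm"
      by (rule det_permute_rows[OF Bc p])
    finally show ?thesis by (simp add: atLeast0LessThan)
  qed
  define C where "C = mat k k (\<lambda>(i,m). Aa m i)"
  have Cc: "C \<in> carrier_mat k k" unfolding C_def by simp
  have step3: "(\<Sum>\<pi> \<in> ?T. F \<pi>) = Determinant.det Bm * Determinant.det C"
  proof -
    have "(\<Sum>\<pi> \<in> ?T. F \<pi>) = (\<Sum>\<pi> \<in> ?T. Determinant.det Bm * (of_int (sign \<pi>) * (\<Prod>i = 0..<k. C $$ (i, \<pi> i))))"
    proof (rule sum.cong)
      fix \<pi> assume "\<pi> \<in> ?T"
      then have p: "\<pi> permutes {0..<k}" by simp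
      have "(\<Prod>i = 0..<k. C $$ (i, \<pi> i)) = (\<Prod>i = 0..<k. Aa (\<pi> i) i)"
        using permutes_in_image[OF p] by (intro prod.cong) (auto simp: C_def)
      then show "F \<pi> = Determinant.det Bm * (of_int (sign \<pi>) * (\<Prod>i = 0..<k. C $$ (i, \<pi> i)))"
        using step2[OF p] by simp
    qed simp
    also have "\<dots> = Determinant.det Bm * Determinant.det C"
      unfolding det_def'[OF Cc] by (simp add: sum_distrib_left)
    finally show ?thesis .
  qed
  have step4: "Determinant.det C = (\<Prod>m<k. G m ^ 2) * Determinant.det Bm"
  proof -
    have "C = transpose_mat (mat k k (\<lambda>(m,i). G m ^ 2 * pochhammer (1 + y m) i))"
      unfolding C_def Aa_def by (intro eq_matI) auto
    then have "Determinant.det C = Determinant.det (mat k k (\<lambda>(m,i). G m ^ 2 * pochhammer (1 + y m) i))"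
      using det_transpose by (metis mat_carrier)
    also have "\<dots> = (\<Prod>m<k. G m ^ 2) * Determinant.det Bm"
      unfolding Bm_def by (rule det_row_scale)
    finally show ?thesis .
  qed
  have step5: "Determinant.det Bm = (\<Prod>i'<k. \<alpha> ^ i' * fact i')"
  proof -
    have "Determinant.det Bm = (\<Prod>i'<k. \<Prod>i<i'. (y i' - y i))"
      unfolding Bm_def by (rule vdm)
    also have "\<dots> = (\<Prod>i'<k. \<alpha> ^ i' * fact i')"
    proof (rule prod.cong)
      fix i' :: nat
      have "(\<Prod>i<i'. (y i' - y i)) = (\<Prod>i<i'. \<alpha> * (real i' - real i))"
        by (intro prod.cong) (auto simp: y_def algebra_simps)
      also have "\<dots> = \<alpha> ^ i' * fact i'"
        by (simp add: prod.distrib fact_prod)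
      finally show "(\<Prod>i<i'. (y i' - y i)) = \<alpha> ^ i' * fact i'" .
    qed simp
    finally show ?thesis .
  qed
  have rhs: "(\<Prod>j = 1..k. fact (j - 1) * Gamma (1 + \<alpha> * real j)) = (\<Prod>m<k. fact m * G m)"
    by (simp add: prod.atLeast1_atMost_eq G_def y_def mult.commute)
  have pw: "(\<Prod>i'<k. \<alpha> ^ i') ^ 2 = \<alpha> ^ (k * (k - 1))"
  proof -
    have e: "2 * \<Sum> {..<k} = k * (k - 1)" using sum_id2[of k] by simp
    show ?thesis
      by (simp add: power_sum[symmetric] power_mult[symmetric] mult.commute e)
  qed
  have "(\<Sum>\<sigma> | \<sigma> permutes {1..k}. det (gamma_mat \<alpha> k \<sigma>))
      = Determinant.det Bm * ((\<Prod>m<k. G m ^ 2) * Determinant.det Bm)"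
    using step1 step3 step4 by simp
  also have "\<dots> = (\<Prod>i'<k. \<alpha> ^ i') ^ 2 * (\<Prod>m<k. fact m * G m) ^ 2"
    unfolding step5 by (simp add: prod.distrib power_mult_distrib prod_power_distrib[symmetric] power2_eq_square)
  finally show ?thesis unfolding pw rhs .
qed

end
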